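(* Let $n\ge1$ and on $\mathbb{D}^n$ (coordinates $\alpha_0,\dots,\alpha_{n-1}$) use the Poisson bracket described in the context. Let $\Phi_n,\Psi_n$ be the monic first and second kind orthogonal polynomials on the unit circle and $\Phi_n^*,\Psi_n^*$ their reversed polynomials. Then for all $z,w$: \[ \{\Phi_n(z),\Phi_n(w)\}=\{\Psi_n(z),\Psi_n(w)\}=\{\Phi_n^*(z),\Phi_n^*(w)\}=\{\Psi_n^*(z),\Psi_n^*(w)\}=0, \] \[ \{\Phi_n^*(z),\Psi_n^*(w)\}=-\frac{i}{2}\Bigl[\bigl(\Phi_n^*(z)\Psi_n^*(w)-\Psi_n^*(z)\Phi_n^*(w)\bigr)\frac{z+w}{z-w}-\Phi_n^*(z)\Phi_n^*(w)+\Psi_n^*(z)\Psi_n^*(w)\Bigr], \] \[ \{\Phi_n(z),\Psi_n(w)\}=-\frac{i}{2}\Bigl[\bigl(\Phi_n(z)\Psi_n(w)-\Psi_n(z)\Phi_n(w)\bigr)\frac{z+w}{z-w}+\Phi_n(z)\Phi_n(w)-\Psi_n(z)\Psi_n(w)\Bigr]. \]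
   Context: Let $\rho_j=(1-|\alpha_j|^2)^{1/2}$; the Poisson bracket is $\{f,g\}=\sum_{j=0}^{n-1}i\rho_j^2\bigl(\frac{\partial f}{\partial\bar\alpha_j}\frac{\partial g}{\partial\alpha_j}-\frac{\partial f}{\partial\alpha_j}\frac{\partial g}{\partial\bar\alpha_j}\bigr)$ (Wirtinger derivatives), i.e. $\{\alpha_j,\alpha_k\}=0$, $\{\alpha_j,\bar\alpha_k\}=-i\rho_j^2\delta_{jk}$; $z,w$ are held fixed. $\Phi_0=1$, $\Phi_{k+1}(z)=z\Phi_k(z)-\bar\alpha_k\Phi_k^*(z)$, $\Phi_k^*(z)=z^k\overline{\Phi_k(1/\bar z)}$; $\Psi_k$ satisfies the same recursion with each $\alpha_j$ replaced by $-\alpha_j$, and $\Psi_k^*(z)=z^k\overline{\Psi_k(1/\bar z)}$. The identities are identities of polynomials in $z,w$. *)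

theory Defs
  imports "HOL-Analysis.Analysis" "HOL-Computational_Algebra.Polynomial"
begin

text \<open>Reversed polynomial of degree (at most) k: z^k * conj(p(1/conj z)),
  written out on coefficients.\<close>
definition rev_poly :: "nat \<Rightarrow> complex poly \<Rightarrow> complex poly" where
  "rev_poly k p = (\<Sum>i\<le>k. monom (cnj (coeff p i)) (k - i))"

fun opuc :: "(nat \<Rightarrow> complex) \<Rightarrow> nat \<Rightarrow> complex poly" where
  "opuc a 0 = 1"
| "opuc a (Suc k) = pCons 0 (opuc a k) - smult (cnj (a k)) (rev_poly k (opuc a k))"

definition Phi :: "(nat \<Rightarrow> complex) \<Rightarrow> nat \<Rightarrow> complex \<Rightarrow> complex" where
  "Phi a k z = poly (opuc a k) z"
definition PhiStar :: "(nat \<Rightarrow> complex) \<Rightarrow> nat \<Rightarrow> complex \<Rightarrow> complex" where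
  "PhiStar a k z = poly (rev_poly k (opuc a k)) z"
definition Psi :: "(nat \<Rightarrow> complex) \<Rightarrow> nat \<Rightarrow> complex \<Rightarrow> complex" where
  "Psi a k z = poly (opuc (\<lambda>j. - a j) k) z"
definition PsiStar :: "(nat \<Rightarrow> complex) \<Rightarrow> nat \<Rightarrow> complex \<Rightarrow> complex" where
  "PsiStar a k z = poly (rev_poly k (opuc (\<lambda>j. - a j) k)) z"

definition dRe :: "((nat \<Rightarrow> complex) \<Rightarrow> complex) \<Rightarrow> nat \<Rightarrow> (nat \<Rightarrow> complex) \<Rightarrow> complex" where
  "dRe f j a = vector_derivative (\<lambda>t::real. f (a(j := a j + of_real t))) (at 0)"
definition dIm :: "((nat \<Rightarrow> complex) \<Rightarrow> complex) \<Rightarrow> nat \<Rightarrow> (nat \<Rightarrow> complex) \<Rightarrow> complex" where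
  "dIm f j a = vector_derivative (\<lambda>t::real. f (a(j := a j + \<i> * of_real t))) (at 0)"
definition wirt :: "((nat \<Rightarrow> complex) \<Rightarrow> complex) \<Rightarrow> nat \<Rightarrow> (nat \<Rightarrow> complex) \<Rightarrow> complex" where
  "wirt f j a = (dRe f j a - \<i> * dIm f j a) / 2"
definition wirt_bar :: "((nat \<Rightarrow> complex) \<Rightarrow> complex) \<Rightarrow> nat \<Rightarrow> (nat \<Rightarrow> complex) \<Rightarrow> complex" where
  "wirt_bar f j a = (dRe f j a + \<i> * dIm f j a) / 2"

definition pbracket :: "nat \<Rightarrow> ((nat \<Rightarrow> complex) \<Rightarrow> complex) \<Rightarrow> ((nat \<Rightarrow> complex) \<Rightarrow> complex)
    \<Rightarrow> (nat \<Rightarrow> complex) \<Rightarrow> complex" where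
  "pbracket n f g a = (\<Sum>j<n. \<i> * of_real (1 - (norm (a j))\<^sup>2) *
      (wirt_bar f j a * wirt g j a - wirt f j a * wirt_bar g j a))"

end

theory Submission
  imports Defs
begin


lemma coeff_rev_poly: "coeff (rev_poly k p) m = (if m \<le> k then cnj (coeff p (k - m)) else 0)"
proof -
  have "coeff (rev_poly k p) m = (\<Sum>i\<le>k. if k - i = m then cnj (coeff p i) else 0)"
    by (simp add: rev_poly_def coeff_sum coeff_monom)
  also have "\<dots> = (if m \<le> k then cnj (coeff p (k - m)) else 0)"
  proof (cases "m \<le> k")
    case True
    have "(\<Sum>i\<le>k. if k - i = m then cnj (coeff p i) else 0) = (\<Sum>i\<le>k. if i = k - m then cnj (coeff p i) else 0)"
      by (rule sum.cong) (use True in auto)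
    then show ?thesis using True by simp
  next
    case False
    then show ?thesis by (intro trans[OF sum.neutral]) auto
  qed
  finally show ?thesis .
qed

lemma opuc_deg: "k < i \<Longrightarrow> coeff (opuc a k) i = 0"
proof (induction k arbitrary: i)
  case 0 then show ?case by (simp add: coeff_1)
next
  case (Suc k)
  then obtain i' where i: "i = Suc i'" "k < i'" by (cases i) auto
  then show ?case using Suc by (simp add: coeff_rev_poly)
qed

lemma rev_opuc_Suc: "rev_poly (Suc k) (opuc a (Suc k)) = rev_poly k (opuc a k) - smult (a k) (pCons 0 (opuc a k))"
proof (rule poly_eqI)
  fix m
  show "coeff (rev_poly (Suc k) (opuc a (Suc k))) m = coeff (rev_poly k (opuc a k) - smult (a k) (pCons 0 (opuc a k))) m"
  proof (cases m)
    case 0 then show ?thesis by (simp add: coeff_rev_poly coeff_pCons split: nat.splits)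
  next
    case (Suc m')
    show ?thesis
    proof (cases "m' \<le> k")
      case True
      then show ?thesis using Suc
        apply (auto simp add: coeff_rev_poly coeff_pCons Suc_diff_le split: nat.splits)
        apply (subgoal_tac "x2 = k - Suc m'")
         apply simp
        apply arith
        done
    next
      case False
      then show ?thesis using Suc by (auto simp add: coeff_rev_poly opuc_deg)
    qed
  qed
qed

lemma opuc_cong: "(\<And>j. j < n \<Longrightarrow> a j = b j) \<Longrightarrow> opuc a n = opuc b n"
  by (induction n) auto

lemma Phi_Suc: "Phi b (Suc n) z = z * Phi b n z - cnj (b n) * PhiStar b n z"
  by (simp add: Phi_def PhiStar_def)
lemma PhiStar_Suc: "PhiStar b (Suc n) z = PhiStar b n z - b n * z * Phi b n z"
  unfolding Phi_def PhiStar_def rev_opuc_Suc by (simp add: algebra_simps)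
lemma Psi_Suc: "Psi b (Suc n) z = z * Psi b n z + cnj (b n) * PsiStar b n z"
  by (simp add: Psi_def PsiStar_def)
lemma PsiStar_Suc: "PsiStar b (Suc n) z = PsiStar b n z + b n * z * Psi b n z"
  unfolding Psi_def PsiStar_def rev_opuc_Suc by (simp add: algebra_simps)



definition HasW :: "((nat \<Rightarrow> complex) \<Rightarrow> complex) \<Rightarrow> nat \<Rightarrow> (nat \<Rightarrow> complex) \<Rightarrow> complex \<Rightarrow> complex \<Rightarrow> bool" where
  "HasW f j a D Db \<longleftrightarrow>
     ((\<lambda>t::real. f (a(j := a j + of_real t))) has_vector_derivative (D + Db)) (at 0) \<and>
     ((\<lambda>t::real. f (a(j := a j + \<i> * of_real t))) has_vector_derivative (\<i> * (D - Db))) (at 0)"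

lemma HasW_wirt: assumes "HasW f j a D Db" shows "wirt f j a = D" "wirt_bar f j a = Db"
proof -
  have r: "dRe f j a = D + Db" and i: "dIm f j a = \<i> * (D - Db)"
    using assms unfolding HasW_def dRe_def dIm_def by (auto intro: vector_derivative_at)
  show "wirt f j a = D" unfolding wirt_def r i by (simp add: algebra_simps)
  show "wirt_bar f j a = Db" unfolding wirt_bar_def r i by (simp add: algebra_simps)
qed

lemma HasW_const: "(\<And>x. f (a(j := x)) = f a) \<Longrightarrow> HasW f j a 0 0"
  unfolding HasW_def by simp

lemma HasW_add: "HasW f j a D1 Db1 \<Longrightarrow> HasW g j a D2 Db2 \<Longrightarrow> HasW (\<lambda>b. f b + g b) j a (D1 + D2) (Db1 + Db2)"
proof -
  assume f: "HasW f j a D1 Db1" and g: "HasW g j a D2 Db2"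
  have 1: "((\<lambda>t::real. f (a(j := a j + of_real t)) + g (a(j := a j + of_real t))) has_vector_derivative ((D1 + Db1) + (D2 + Db2))) (at 0)"
    using f g unfolding HasW_def by (intro has_vector_derivative_add) auto
  have 2: "((\<lambda>t::real. f (a(j := a j + \<i> * of_real t)) + g (a(j := a j + \<i> * of_real t))) has_vector_derivative (\<i> * (D1 - Db1) + \<i> * (D2 - Db2))) (at 0)"
    using f g unfolding HasW_def by (intro has_vector_derivative_add) auto
  show ?thesis unfolding HasW_def using 1 2 by (simp add: algebra_simps)
qed

lemma HasW_diff: "HasW f j a D1 Db1 \<Longrightarrow> HasW g j a D2 Db2 \<Longrightarrow> HasW (\<lambda>b. f b - g b) j a (D1 - D2) (Db1 - Db2)"
proof -
  assume f: "HasW f j a D1 Db1" and g: "HasW g j a D2 Db2"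
  have 1: "((\<lambda>t::real. f (a(j := a j + of_real t)) - g (a(j := a j + of_real t))) has_vector_derivative ((D1 + Db1) - (D2 + Db2))) (at 0)"
    using f g unfolding HasW_def by (intro has_vector_derivative_diff) auto
  have 2: "((\<lambda>t::real. f (a(j := a j + \<i> * of_real t)) - g (a(j := a j + \<i> * of_real t))) has_vector_derivative (\<i> * (D1 - Db1) - \<i> * (D2 - Db2))) (at 0)"
    using f g unfolding HasW_def by (intro has_vector_derivative_diff) auto
  show ?thesis unfolding HasW_def using 1 2 by (simp add: algebra_simps)
qed

lemma HasW_mult: "HasW f j a D1 Db1 \<Longrightarrow> HasW g j a D2 Db2 \<Longrightarrow>
   HasW (\<lambda>b. f b * g b) j a (f a * D2 + D1 * g a) (f a * Db2 + Db1 * g a)"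
proof -
  assume f: "HasW f j a D1 Db1" and g: "HasW g j a D2 Db2"
  have 1: "((\<lambda>t::real. f (a(j := a j + of_real t)) * g (a(j := a j + of_real t))) has_vector_derivative
      (f (a(j := a j + of_real 0)) * (D2 + Db2) + (D1 + Db1) * g (a(j := a j + of_real 0)))) (at 0)"
    using f g unfolding HasW_def by (intro has_vector_derivative_mult) auto
  have 2: "((\<lambda>t::real. f (a(j := a j + \<i> * of_real t)) * g (a(j := a j + \<i> * of_real t))) has_vector_derivative
      (f (a(j := a j + \<i> * of_real 0)) * (\<i> * (D2 - Db2)) + \<i> * (D1 - Db1) * g (a(j := a j + \<i> * of_real 0)))) (at 0)"
    using f g unfolding HasW_def by (intro has_vector_derivative_mult) auto
  show ?thesis unfolding HasW_def using 1 2 by (simp add: algebra_simps)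
qed

lemma HasW_var_same: "HasW (\<lambda>b. b j) j a 1 0"
  unfolding HasW_def
  apply simp
  apply (intro conjI)
   apply (rule derivative_eq_intros refl | simp)+
  done

lemma HasW_cnj_same: "HasW (\<lambda>b. cnj (b j)) j a 0 1"
  unfolding HasW_def
  apply simp
  apply (intro conjI)
   apply (rule derivative_eq_intros refl | simp)+
  done

lemma HasW_var_other: "k \<noteq> j \<Longrightarrow> HasW (\<lambda>b. b k) j a 0 0"
  by (rule HasW_const) simp

lemma HasW_cnj_other: "k \<noteq> j \<Longrightarrow> HasW (\<lambda>b. cnj (b k)) j a 0 0"
  by (rule HasW_const) simp

definition "Wd f j a \<longleftrightarrow> (\<exists>D Db. HasW f j a D Db)"

lemma Wd_HasW: "Wd f j a \<Longrightarrow> HasW f j a (wirt f j a) (wirt_bar f j a)"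
  unfolding Wd_def using HasW_wirt by metis

lemma Wd_I: "HasW f j a D Db \<Longrightarrow> Wd f j a" unfolding Wd_def by blast



lemma HasW_cmult: "HasW f j a D Db \<Longrightarrow> HasW (\<lambda>b. e * f b) j a (e * D) (e * Db)"
proof -
  assume f: "HasW f j a D Db"
  have c: "HasW (\<lambda>b. e) j a 0 0" by (rule HasW_const) simp
  show ?thesis using HasW_mult[OF c f] by simp
qed

lemma Wd_const: "(\<And>x. f (a(j := x)) = f a) \<Longrightarrow> Wd f j a"
  by (rule Wd_I[OF HasW_const])
lemma Wd_add: "Wd f j a \<Longrightarrow> Wd g j a \<Longrightarrow> Wd (\<lambda>b. f b + g b) j a"
  unfolding Wd_def using HasW_add by blast
lemma Wd_mult: "Wd f j a \<Longrightarrow> Wd g j a \<Longrightarrow> Wd (\<lambda>b. f b * g b) j a"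
  unfolding Wd_def using HasW_mult by blast
lemma Wd_var: "Wd (\<lambda>b. b k) j a"
  by (cases "k = j") (auto intro: Wd_I HasW_var_same HasW_var_other)
lemma Wd_cnj: "Wd (\<lambda>b. cnj (b k)) j a"
  by (cases "k = j") (auto intro: Wd_I HasW_cnj_same HasW_cnj_other)

lemma fPhi_Suc: "(\<lambda>b. Phi b (Suc n) z) = (\<lambda>b. z * Phi b n z + ((-1) * cnj (b n)) * PhiStar b n z)"
  by (simp add: Phi_Suc)
lemma fPhiStar_Suc: "(\<lambda>b. PhiStar b (Suc n) z) = (\<lambda>b. 1 * PhiStar b n z + ((-z) * b n) * Phi b n z)"
  by (simp add: PhiStar_Suc algebra_simps)
lemma fPsi_Suc: "(\<lambda>b. Psi b (Suc n) z) = (\<lambda>b. z * Psi b n z + (1 * cnj (b n)) * PsiStar b n z)"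
  by (simp add: Psi_Suc)
lemma fPsiStar_Suc: "(\<lambda>b. PsiStar b (Suc n) z) = (\<lambda>b. 1 * PsiStar b n z + (z * b n) * Psi b n z)"
  by (simp add: PsiStar_Suc algebra_simps)

lemma Wd_all: "Wd (\<lambda>b. Phi b n z) j a \<and> Wd (\<lambda>b. PhiStar b n z) j a \<and> Wd (\<lambda>b. Psi b n z) j a \<and> Wd (\<lambda>b. PsiStar b n z) j a"
proof (induction n)
  case 0
  show ?case by (intro conjI Wd_const) (simp_all add: Phi_def PhiStar_def Psi_def PsiStar_def rev_poly_def)
next
  case (Suc n)
  then have h: "Wd (\<lambda>b. Phi b n z) j a" "Wd (\<lambda>b. PhiStar b n z) j a" "Wd (\<lambda>b. Psi b n z) j a" "Wd (\<lambda>b. PsiStar b n z) j a"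
    by auto
  have c: "Wd (\<lambda>b. e) j a" for e by (rule Wd_const) simp
  show ?case
    unfolding fPhi_Suc fPhiStar_Suc fPsi_Suc fPsiStar_Suc
    by (intro conjI Wd_add Wd_mult Wd_var Wd_cnj c h)
qed

lemma const_n: "Phi (a(n := x)) n z = Phi a n z" "PhiStar (a(n := x)) n z = PhiStar a n z"
   "Psi (a(n := x)) n z = Psi a n z" "PsiStar (a(n := x)) n z = PsiStar a n z"
proof -
  have 1: "opuc (a(n := x)) n = opuc a n" by (rule opuc_cong) simp
  have 2: "opuc (\<lambda>j. - (a(n := x)) j) n = opuc (\<lambda>j. - a j) n" by (rule opuc_cong) simp
  show "Phi (a(n := x)) n z = Phi a n z" "PhiStar (a(n := x)) n z = PhiStar a n z"
   "Psi (a(n := x)) n z = Psi a n z" "PsiStar (a(n := x)) n z = PsiStar a n z"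
    unfolding Phi_def PhiStar_def Psi_def PsiStar_def 1 2 by simp_all
qed

lemma HasW_lin: assumes "HasW f1 j a D1 Db1" "HasW f2 j a D2 Db2" "HasW c j a Dc Dbc"
  shows "HasW (\<lambda>b. e * f1 b + c b * f2 b) j a (e*D1 + c a * D2 + Dc * f2 a) (e*Db1 + c a * Db2 + Dbc * f2 a)"
  using HasW_add[OF HasW_cmult[OF assms(1), of e] HasW_mult[OF assms(3) assms(2)]]
  by (simp add: algebra_simps)

lemma pb_step:
  assumes f1: "\<And>j. j < n \<Longrightarrow> Wd f1 j a" and f2: "\<And>j. j < n \<Longrightarrow> Wd f2 j a"
    and g1: "\<And>j. j < n \<Longrightarrow> Wd g1 j a" and g2: "\<And>j. j < n \<Longrightarrow> Wd g2 j a"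
    and cj: "\<And>j. j < n \<Longrightarrow> HasW c j a 0 0" and dj: "\<And>j. j < n \<Longrightarrow> HasW d j a 0 0"
    and cn: "HasW c n a Dc Dbc" and dn: "HasW d n a Dd Dbd"
    and f1n: "\<And>x. f1 (a(n := x)) = f1 a" and f2n: "\<And>x. f2 (a(n := x)) = f2 a"
    and g1n: "\<And>x. g1 (a(n := x)) = g1 a" and g2n: "\<And>x. g2 (a(n := x)) = g2 a"
  shows "pbracket (Suc n) (\<lambda>b. e1 * f1 b + c b * f2 b) (\<lambda>b. e2 * g1 b + d b * g2 b) a =
     e1 * e2 * pbracket n f1 g1 a + e1 * d a * pbracket n f1 g2 a + c a * e2 * pbracket n f2 g1 a
     + c a * d a * pbracket n f2 g2 a
     + \<i> * (1 - a n * cnj (a n)) * (Dbc * f2 a * (Dd * g2 a) - Dc * f2 a * (Dbd * g2 a))"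
proof -
  let ?f = "\<lambda>b. e1 * f1 b + c b * f2 b" and ?g = "\<lambda>b. e2 * g1 b + d b * g2 b"
  define r where "r j = \<i> * of_real (1 - (norm (a j))\<^sup>2)" for j
  have r: "r j = \<i> * (1 - a j * cnj (a j))" for j
    unfolding r_def by (simp add: complex_norm_square[symmetric])
  define S where "S f g j = r j * (wirt_bar f j a * wirt g j a - wirt f j a * wirt_bar g j a)" for f g j
  have pb: "pbracket m f g a = (\<Sum>j<m. S f g j)" for m f g
    unfolding pbracket_def S_def r_def ..
  have wf: "wirt ?f j a = e1 * wirt f1 j a + c a * wirt f2 j a \<and> wirt_bar ?f j a = e1 * wirt_bar f1 j a + c a * wirt_bar f2 j a"
    if "j < n" for j
    using HasW_wirt[OF HasW_lin[OF Wd_HasW[OF f1[OF that]] Wd_HasW[OF f2[OF that]] cj[OF that], of e1]] by simp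
  have wg: "wirt ?g j a = e2 * wirt g1 j a + d a * wirt g2 j a \<and> wirt_bar ?g j a = e2 * wirt_bar g1 j a + d a * wirt_bar g2 j a"
    if "j < n" for j
    using HasW_wirt[OF HasW_lin[OF Wd_HasW[OF g1[OF that]] Wd_HasW[OF g2[OF that]] dj[OF that], of e2]] by simp
  have sj: "S ?f ?g j = e1 * e2 * S f1 g1 j + e1 * d a * S f1 g2 j + c a * e2 * S f2 g1 j + c a * d a * S f2 g2 j"
    if "j < n" for j
    unfolding S_def using wf[OF that] wg[OF that] by (simp add: algebra_simps)
  have fn: "HasW ?f n a (Dc * f2 a) (Dbc * f2 a)"
    using HasW_lin[OF HasW_const[of f1, OF f1n] HasW_const[of f2, OF f2n] cn, of e1] by simp
  have gn: "HasW ?g n a (Dd * g2 a) (Dbd * g2 a)"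
    using HasW_lin[OF HasW_const[of g1, OF g1n] HasW_const[of g2, OF g2n] dn, of e2] by simp
  have sn: "S ?f ?g n = \<i> * (1 - a n * cnj (a n)) * (Dbc * f2 a * (Dd * g2 a) - Dc * f2 a * (Dbd * g2 a))"
    unfolding S_def HasW_wirt[OF fn] HasW_wirt[OF gn] r ..
  have "pbracket (Suc n) ?f ?g a = (\<Sum>j<n. S ?f ?g j) + S ?f ?g n"
    unfolding pb by simp
  also have "(\<Sum>j<n. S ?f ?g j) = (\<Sum>j<n. e1 * e2 * S f1 g1 j + e1 * d a * S f1 g2 j + c a * e2 * S f2 g1 j + c a * d a * S f2 g2 j)"
    by (rule sum.cong) (simp_all add: sj)
  also have "\<dots> = e1 * e2 * pbracket n f1 g1 a + e1 * d a * pbracket n f1 g2 a + c a * e2 * pbracket n f2 g1 a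
     + c a * d a * pbracket n f2 g2 a"
    unfolding pb by (simp add: sum.distrib sum_distrib_left)
  finally show ?thesis unfolding sn .
qed



lemma in4: "Phi \<in> {Phi, PhiStar, Psi, PsiStar}" "PhiStar \<in> {Phi, PhiStar, Psi, PsiStar}"
  "Psi \<in> {Phi, PhiStar, Psi, PsiStar}" "PsiStar \<in> {Phi, PhiStar, Psi, PsiStar}" by simp_all

lemma cPhi_j: "j < n \<Longrightarrow> HasW (\<lambda>b. (-1) * cnj (b n)) j a 0 0" by (rule HasW_const) simp
lemma cPhiStar_j: "j < n \<Longrightarrow> HasW (\<lambda>b. (-z) * b n) j a 0 0" by (rule HasW_const) simp
lemma cPsi_j: "j < n \<Longrightarrow> HasW (\<lambda>b. 1 * cnj (b n)) j a 0 0" by (rule HasW_const) simp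
lemma cPsiStar_j: "j < n \<Longrightarrow> HasW (\<lambda>b. z * b n) j a 0 0" by (rule HasW_const) simp
lemma cPhi_n: "HasW (\<lambda>b. (-1) * cnj (b n)) n a 0 (-1)" using HasW_cmult[OF HasW_cnj_same, of "-1"] by simp
lemma cPhiStar_n: "HasW (\<lambda>b. (-z) * b n) n a (-z) 0" using HasW_cmult[OF HasW_var_same, of "-z"] by simp
lemma cPsi_n: "HasW (\<lambda>b. 1 * cnj (b n)) n a 0 1" using HasW_cmult[OF HasW_cnj_same, of "1"] by simp
lemma cPsiStar_n: "HasW (\<lambda>b. z * b n) n a z 0" using HasW_cmult[OF HasW_var_same, of "z"] by simp

lemma pair_step:
  assumes fF: "(\<lambda>b. F b (Suc n) z) = (\<lambda>b. e1 * FA b n z + c b * FB b n z)"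
    and fG: "(\<lambda>b. G b (Suc n) w) = (\<lambda>b. e2 * GA b n w + d b * GB b n w)"
    and cj: "\<And>j. j < n \<Longrightarrow> HasW c j a 0 0" and dj: "\<And>j. j < n \<Longrightarrow> HasW d j a 0 0"
    and cn: "HasW c n a Dc Dbc" and dn: "HasW d n a Dd Dbd"
    and I11: "(z - w) * 2 * pbracket n (\<lambda>b. FA b n z) (\<lambda>b. GA b n w) a = X11"
    and I12: "(z - w) * 2 * pbracket n (\<lambda>b. FA b n z) (\<lambda>b. GB b n w) a = X12"
    and I21: "(z - w) * 2 * pbracket n (\<lambda>b. FB b n z) (\<lambda>b. GA b n w) a = X21"
    and I22: "(z - w) * 2 * pbracket n (\<lambda>b. FB b n z) (\<lambda>b. GB b n w) a = X22"
    and m: "FA \<in> {Phi, PhiStar, Psi, PsiStar}" "FB \<in> {Phi, PhiStar, Psi, PsiStar}"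
      "GA \<in> {Phi, PhiStar, Psi, PsiStar}" "GB \<in> {Phi, PhiStar, Psi, PsiStar}"
  shows "(z - w) * 2 * pbracket (Suc n) (\<lambda>b. F b (Suc n) z) (\<lambda>b. G b (Suc n) w) a =
    e1 * e2 * X11 + e1 * d a * X12 + c a * e2 * X21 + c a * d a * X22
    + (z - w) * 2 * (\<i> * (1 - a n * cnj (a n)) * (Dbc * FB a n z * (Dd * GB a n w) - Dc * FB a n z * (Dbd * GB a n w)))"
proof -
  have W: "Wd (\<lambda>b. H b n x) j a" if "H \<in> {Phi, PhiStar, Psi, PsiStar}" for H x j
    using that Wd_all[of n x j a] by auto
  have K: "H (a(n := y)) n x = H a n x" if "H \<in> {Phi, PhiStar, Psi, PsiStar}" for H x y
    using that const_n[of a n y x] by auto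
  have "pbracket (Suc n) (\<lambda>b. F b (Suc n) z) (\<lambda>b. G b (Suc n) w) a =
     e1 * e2 * pbracket n (\<lambda>b. FA b n z) (\<lambda>b. GA b n w) a + e1 * d a * pbracket n (\<lambda>b. FA b n z) (\<lambda>b. GB b n w) a
     + c a * e2 * pbracket n (\<lambda>b. FB b n z) (\<lambda>b. GA b n w) a
     + c a * d a * pbracket n (\<lambda>b. FB b n z) (\<lambda>b. GB b n w) a
     + \<i> * (1 - a n * cnj (a n)) * (Dbc * FB a n z * (Dd * GB a n w) - Dc * FB a n z * (Dbd * GB a n w))"
    unfolding fF fG
    by (rule pb_step[OF W[OF m(1)] W[OF m(2)] W[OF m(3)] W[OF m(4)] cj dj cn dn K[OF m(1)] K[OF m(2)] K[OF m(3)] K[OF m(4)]])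
  then have "(z - w) * 2 * pbracket (Suc n) (\<lambda>b. F b (Suc n) z) (\<lambda>b. G b (Suc n) w) a =
     e1 * e2 * ((z - w) * 2 * pbracket n (\<lambda>b. FA b n z) (\<lambda>b. GA b n w) a)
     + e1 * d a * ((z - w) * 2 * pbracket n (\<lambda>b. FA b n z) (\<lambda>b. GB b n w) a)
     + c a * e2 * ((z - w) * 2 * pbracket n (\<lambda>b. FB b n z) (\<lambda>b. GA b n w) a)
     + c a * d a * ((z - w) * 2 * pbracket n (\<lambda>b. FB b n z) (\<lambda>b. GB b n w) a)
     + (z - w) * 2 * (\<i> * (1 - a n * cnj (a n)) * (Dbc * FB a n z * (Dd * GB a n w) - Dc * FB a n z * (Dbd * GB a n w)))"
    by (simp only: ring_distribs mult_ac)
  then show ?thesis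
    by (simp only: I11 I12 I21 I22)
qed

lemma main_ind:
  shows "(\<forall>z w. (z - w) * 2 * pbracket n (\<lambda>b. Phi b n z) (\<lambda>b. Phi b n w) a = 0)
    \<and> (\<forall>z w. (z - w) * 2 * pbracket n (\<lambda>b. Phi b n z) (\<lambda>b. PhiStar b n w) a = - (- 2 * \<i> * w) * Phi a n z * PhiStar a n w + (- 2 * \<i> * w) * PhiStar a n z * Phi a n w)
    \<and> (\<forall>z w. (z - w) * 2 * pbracket n (\<lambda>b. PhiStar b n z) (\<lambda>b. Phi b n w) a = (- 2 * \<i> * z) * Phi a n z * PhiStar a n w - (- 2 * \<i> * z) * PhiStar a n z * Phi a n w)
    \<and> (\<forall>z w. (z - w) * 2 * pbracket n (\<lambda>b. PhiStar b n z) (\<lambda>b. PhiStar b n w) a = 0)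
    \<and> (\<forall>z w. (z - w) * 2 * pbracket n (\<lambda>b. Psi b n z) (\<lambda>b. Psi b n w) a = 0)
    \<and> (\<forall>z w. (z - w) * 2 * pbracket n (\<lambda>b. Psi b n z) (\<lambda>b. PsiStar b n w) a = - (- 2 * \<i> * w) * Psi a n z * PsiStar a n w + (- 2 * \<i> * w) * PsiStar a n z * Psi a n w)
    \<and> (\<forall>z w. (z - w) * 2 * pbracket n (\<lambda>b. PsiStar b n z) (\<lambda>b. Psi b n w) a = (- 2 * \<i> * z) * Psi a n z * PsiStar a n w - (- 2 * \<i> * z) * PsiStar a n z * Psi a n w)
    \<and> (\<forall>z w. (z - w) * 2 * pbracket n (\<lambda>b. PsiStar b n z) (\<lambda>b. PsiStar b n w) a = 0)
    \<and> (\<forall>z w. (z - w) * 2 * pbracket n (\<lambda>b. Phi b n z) (\<lambda>b. Psi b n w) a = - (\<i> * (z - w)) * Phi a n z * Phi a n w + (- \<i> * (z + w)) * Phi a n z * Psi a n w - (- \<i> * (z + w)) * Psi a n z * Phi a n w + (\<i> * (z - w)) * Psi a n z * Psi a n w)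
    \<and> (\<forall>z w. (z - w) * 2 * pbracket n (\<lambda>b. Phi b n z) (\<lambda>b. PsiStar b n w) a = (\<i> * (z - w)) * Phi a n z * PhiStar a n w - (\<i> * (z - w)) * Phi a n z * PsiStar a n w - (- 2 * \<i> * w) * PhiStar a n z * Psi a n w + (- \<i> * (z + w)) * Psi a n z * PhiStar a n w + (\<i> * (z - w)) * Psi a n z * PsiStar a n w)
    \<and> (\<forall>z w. (z - w) * 2 * pbracket n (\<lambda>b. PhiStar b n z) (\<lambda>b. Psi b n w) a = - (- 2 * \<i> * z) * Phi a n z * PsiStar a n w - (\<i> * (z - w)) * PhiStar a n z * Phi a n w + (\<i> * (z - w)) * PhiStar a n z * Psi a n w + (- \<i> * (z + w)) * PsiStar a n z * Phi a n w - (\<i> * (z - w)) * PsiStar a n z * Psi a n w)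
    \<and> (\<forall>z w. (z - w) * 2 * pbracket n (\<lambda>b. PhiStar b n z) (\<lambda>b. PsiStar b n w) a = (\<i> * (z - w)) * PhiStar a n z * PhiStar a n w + (- \<i> * (z + w)) * PhiStar a n z * PsiStar a n w - (- \<i> * (z + w)) * PsiStar a n z * PhiStar a n w - (\<i> * (z - w)) * PsiStar a n z * PsiStar a n w)"
proof (induction n)
  case 0
  show ?case by (simp add: pbracket_def Phi_def PhiStar_def Psi_def PsiStar_def rev_poly_def algebra_simps)
next
  case (Suc n)
  have I1: "\<And>z w. (z - w) * 2 * pbracket n (\<lambda>b. Phi b n z) (\<lambda>b. Phi b n w) a = 0" by (rule Suc[THEN conjunct1, THEN spec, THEN spec])
  have I2: "\<And>z w. (z - w) * 2 * pbracket n (\<lambda>b. Phi b n z) (\<lambda>b. PhiStar b n w) a = - (- 2 * \<i> * w) * Phi a n z * PhiStar a n w + (- 2 * \<i> * w) * PhiStar a n z * Phi a n w" by (rule Suc[THEN conjunct2, THEN conjunct1, THEN spec, THEN spec])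
  have I3: "\<And>z w. (z - w) * 2 * pbracket n (\<lambda>b. PhiStar b n z) (\<lambda>b. Phi b n w) a = (- 2 * \<i> * z) * Phi a n z * PhiStar a n w - (- 2 * \<i> * z) * PhiStar a n z * Phi a n w" by (rule Suc[THEN conjunct2, THEN conjunct2, THEN conjunct1, THEN spec, THEN spec])
  have I4: "\<And>z w. (z - w) * 2 * pbracket n (\<lambda>b. PhiStar b n z) (\<lambda>b. PhiStar b n w) a = 0" by (rule Suc[THEN conjunct2, THEN conjunct2, THEN conjunct2, THEN conjunct1, THEN spec, THEN spec])
  have I5: "\<And>z w. (z - w) * 2 * pbracket n (\<lambda>b. Psi b n z) (\<lambda>b. Psi b n w) a = 0" by (rule Suc[THEN conjunct2, THEN conjunct2, THEN conjunct2, THEN conjunct2, THEN conjunct1, THEN spec, THEN spec])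
  have I6: "\<And>z w. (z - w) * 2 * pbracket n (\<lambda>b. Psi b n z) (\<lambda>b. PsiStar b n w) a = - (- 2 * \<i> * w) * Psi a n z * PsiStar a n w + (- 2 * \<i> * w) * PsiStar a n z * Psi a n w" by (rule Suc[THEN conjunct2, THEN conjunct2, THEN conjunct2, THEN conjunct2, THEN conjunct2, THEN conjunct1, THEN spec, THEN spec])
  have I7: "\<And>z w. (z - w) * 2 * pbracket n (\<lambda>b. PsiStar b n z) (\<lambda>b. Psi b n w) a = (- 2 * \<i> * z) * Psi a n z * PsiStar a n w - (- 2 * \<i> * z) * PsiStar a n z * Psi a n w" by (rule Suc[THEN conjunct2, THEN conjunct2, THEN conjunct2, THEN conjunct2, THEN conjunct2, THEN conjunct2, THEN conjunct1, THEN spec, THEN spec])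
  have I8: "\<And>z w. (z - w) * 2 * pbracket n (\<lambda>b. PsiStar b n z) (\<lambda>b. PsiStar b n w) a = 0" by (rule Suc[THEN conjunct2, THEN conjunct2, THEN conjunct2, THEN conjunct2, THEN conjunct2, THEN conjunct2, THEN conjunct2, THEN conjunct1, THEN spec, THEN spec])
  have I9: "\<And>z w. (z - w) * 2 * pbracket n (\<lambda>b. Phi b n z) (\<lambda>b. Psi b n w) a = - (\<i> * (z - w)) * Phi a n z * Phi a n w + (- \<i> * (z + w)) * Phi a n z * Psi a n w - (- \<i> * (z + w)) * Psi a n z * Phi a n w + (\<i> * (z - w)) * Psi a n z * Psi a n w" by (rule Suc[THEN conjunct2, THEN conjunct2, THEN conjunct2, THEN conjunct2, THEN conjunct2, THEN conjunct2, THEN conjunct2, THEN conjunct2, THEN conjunct1, THEN spec, THEN spec])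
  have I10: "\<And>z w. (z - w) * 2 * pbracket n (\<lambda>b. Phi b n z) (\<lambda>b. PsiStar b n w) a = (\<i> * (z - w)) * Phi a n z * PhiStar a n w - (\<i> * (z - w)) * Phi a n z * PsiStar a n w - (- 2 * \<i> * w) * PhiStar a n z * Psi a n w + (- \<i> * (z + w)) * Psi a n z * PhiStar a n w + (\<i> * (z - w)) * Psi a n z * PsiStar a n w" by (rule Suc[THEN conjunct2, THEN conjunct2, THEN conjunct2, THEN conjunct2, THEN conjunct2, THEN conjunct2, THEN conjunct2, THEN conjunct2, THEN conjunct2, THEN conjunct1, THEN spec, THEN spec])
  have I11: "\<And>z w. (z - w) * 2 * pbracket n (\<lambda>b. PhiStar b n z) (\<lambda>b. Psi b n w) a = - (- 2 * \<i> * z) * Phi a n z * PsiStar a n w - (\<i> * (z - w)) * PhiStar a n z * Phi a n w + (\<i> * (z - w)) * PhiStar a n z * Psi a n w + (- \<i> * (z + w)) * PsiStar a n z * Phi a n w - (\<i> * (z - w)) * PsiStar a n z * Psi a n w" by (rule Suc[THEN conjunct2, THEN conjunct2, THEN conjunct2, THEN conjunct2, THEN conjunct2, THEN conjunct2, THEN conjunct2, THEN conjunct2, THEN conjunct2, THEN conjunct2, THEN conjunct1, THEN spec, THEN spec])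
  have I12: "\<And>z w. (z - w) * 2 * pbracket n (\<lambda>b. PhiStar b n z) (\<lambda>b. PsiStar b n w) a = (\<i> * (z - w)) * PhiStar a n z * PhiStar a n w + (- \<i> * (z + w)) * PhiStar a n z * PsiStar a n w - (- \<i> * (z + w)) * PsiStar a n z * PhiStar a n w - (\<i> * (z - w)) * PsiStar a n z * PsiStar a n w" by (rule Suc[THEN conjunct2, THEN conjunct2, THEN conjunct2, THEN conjunct2, THEN conjunct2, THEN conjunct2, THEN conjunct2, THEN conjunct2, THEN conjunct2, THEN conjunct2, THEN conjunct2, THEN spec, THEN spec])
  have J1: "(z - w) * 2 * pbracket (Suc n) (\<lambda>b. Phi b (Suc n) z) (\<lambda>b. Phi b (Suc n) w) a = 0" for z w
    apply (subst pair_step[where F=Phi and FA=Phi and FB=PhiStar and G=Phi and GA=Phi and GB=PhiStar and n=n and z=z and w=w, OF fPhi_Suc fPhi_Suc cPhi_j cPhi_j cPhi_n cPhi_n I1 I2 I3 I4 in4(1) in4(2) in4(1) in4(2)])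
    apply (simp_all only: Phi_Suc PhiStar_Suc Psi_Suc PsiStar_Suc)
    apply algebra
    done
  have J2: "(z - w) * 2 * pbracket (Suc n) (\<lambda>b. Phi b (Suc n) z) (\<lambda>b. PhiStar b (Suc n) w) a = - (- 2 * \<i> * w) * Phi a (Suc n) z * PhiStar a (Suc n) w + (- 2 * \<i> * w) * PhiStar a (Suc n) z * Phi a (Suc n) w" for z w
    apply (subst pair_step[where F=Phi and FA=Phi and FB=PhiStar and G=PhiStar and GA=PhiStar and GB=Phi and n=n and z=z and w=w, OF fPhi_Suc fPhiStar_Suc cPhi_j cPhiStar_j cPhi_n cPhiStar_n I2 I1 I4 I3 in4(1) in4(2) in4(2) in4(1)])
    apply (simp_all only: Phi_Suc PhiStar_Suc Psi_Suc PsiStar_Suc)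
    apply algebra
    done
  have J3: "(z - w) * 2 * pbracket (Suc n) (\<lambda>b. PhiStar b (Suc n) z) (\<lambda>b. Phi b (Suc n) w) a = (- 2 * \<i> * z) * Phi a (Suc n) z * PhiStar a (Suc n) w - (- 2 * \<i> * z) * PhiStar a (Suc n) z * Phi a (Suc n) w" for z w
    apply (subst pair_step[where F=PhiStar and FA=PhiStar and FB=Phi and G=Phi and GA=Phi and GB=PhiStar and n=n and z=z and w=w, OF fPhiStar_Suc fPhi_Suc cPhiStar_j cPhi_j cPhiStar_n cPhi_n I3 I4 I1 I2 in4(2) in4(1) in4(1) in4(2)])
    apply (simp_all only: Phi_Suc PhiStar_Suc Psi_Suc PsiStar_Suc)
    apply algebra
    done
  have J4: "(z - w) * 2 * pbracket (Suc n) (\<lambda>b. PhiStar b (Suc n) z) (\<lambda>b. PhiStar b (Suc n) w) a = 0" for z w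
    apply (subst pair_step[where F=PhiStar and FA=PhiStar and FB=Phi and G=PhiStar and GA=PhiStar and GB=Phi and n=n and z=z and w=w, OF fPhiStar_Suc fPhiStar_Suc cPhiStar_j cPhiStar_j cPhiStar_n cPhiStar_n I4 I3 I2 I1 in4(2) in4(1) in4(2) in4(1)])
    apply (simp_all only: Phi_Suc PhiStar_Suc Psi_Suc PsiStar_Suc)
    apply algebra
    done
  have J5: "(z - w) * 2 * pbracket (Suc n) (\<lambda>b. Psi b (Suc n) z) (\<lambda>b. Psi b (Suc n) w) a = 0" for z w
    apply (subst pair_step[where F=Psi and FA=Psi and FB=PsiStar and G=Psi and GA=Psi and GB=PsiStar and n=n and z=z and w=w, OF fPsi_Suc fPsi_Suc cPsi_j cPsi_j cPsi_n cPsi_n I5 I6 I7 I8 in4(3) in4(4) in4(3) in4(4)])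
    apply (simp_all only: Phi_Suc PhiStar_Suc Psi_Suc PsiStar_Suc)
    apply algebra
    done
  have J6: "(z - w) * 2 * pbracket (Suc n) (\<lambda>b. Psi b (Suc n) z) (\<lambda>b. PsiStar b (Suc n) w) a = - (- 2 * \<i> * w) * Psi a (Suc n) z * PsiStar a (Suc n) w + (- 2 * \<i> * w) * PsiStar a (Suc n) z * Psi a (Suc n) w" for z w
    apply (subst pair_step[where F=Psi and FA=Psi and FB=PsiStar and G=PsiStar and GA=PsiStar and GB=Psi and n=n and z=z and w=w, OF fPsi_Suc fPsiStar_Suc cPsi_j cPsiStar_j cPsi_n cPsiStar_n I6 I5 I8 I7 in4(3) in4(4) in4(4) in4(3)])
    apply (simp_all only: Phi_Suc PhiStar_Suc Psi_Suc PsiStar_Suc)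
    apply algebra
    done
  have J7: "(z - w) * 2 * pbracket (Suc n) (\<lambda>b. PsiStar b (Suc n) z) (\<lambda>b. Psi b (Suc n) w) a = (- 2 * \<i> * z) * Psi a (Suc n) z * PsiStar a (Suc n) w - (- 2 * \<i> * z) * PsiStar a (Suc n) z * Psi a (Suc n) w" for z w
    apply (subst pair_step[where F=PsiStar and FA=PsiStar and FB=Psi and G=Psi and GA=Psi and GB=PsiStar and n=n and z=z and w=w, OF fPsiStar_Suc fPsi_Suc cPsiStar_j cPsi_j cPsiStar_n cPsi_n I7 I8 I5 I6 in4(4) in4(3) in4(3) in4(4)])
    apply (simp_all only: Phi_Suc PhiStar_Suc Psi_Suc PsiStar_Suc)
    apply algebra
    done
  have J8: "(z - w) * 2 * pbracket (Suc n) (\<lambda>b. PsiStar b (Suc n) z) (\<lambda>b. PsiStar b (Suc n) w) a = 0" for z w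
    apply (subst pair_step[where F=PsiStar and FA=PsiStar and FB=Psi and G=PsiStar and GA=PsiStar and GB=Psi and n=n and z=z and w=w, OF fPsiStar_Suc fPsiStar_Suc cPsiStar_j cPsiStar_j cPsiStar_n cPsiStar_n I8 I7 I6 I5 in4(4) in4(3) in4(4) in4(3)])
    apply (simp_all only: Phi_Suc PhiStar_Suc Psi_Suc PsiStar_Suc)
    apply algebra
    done
  have J9: "(z - w) * 2 * pbracket (Suc n) (\<lambda>b. Phi b (Suc n) z) (\<lambda>b. Psi b (Suc n) w) a = - (\<i> * (z - w)) * Phi a (Suc n) z * Phi a (Suc n) w + (- \<i> * (z + w)) * Phi a (Suc n) z * Psi a (Suc n) w - (- \<i> * (z + w)) * Psi a (Suc n) z * Phi a (Suc n) w + (\<i> * (z - w)) * Psi a (Suc n) z * Psi a (Suc n) w" for z w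
    apply (subst pair_step[where F=Phi and FA=Phi and FB=PhiStar and G=Psi and GA=Psi and GB=PsiStar and n=n and z=z and w=w, OF fPhi_Suc fPsi_Suc cPhi_j cPsi_j cPhi_n cPsi_n I9 I10 I11 I12 in4(1) in4(2) in4(3) in4(4)])
    apply (simp_all only: Phi_Suc PhiStar_Suc Psi_Suc PsiStar_Suc)
    apply algebra
    done
  have J10: "(z - w) * 2 * pbracket (Suc n) (\<lambda>b. Phi b (Suc n) z) (\<lambda>b. PsiStar b (Suc n) w) a = (\<i> * (z - w)) * Phi a (Suc n) z * PhiStar a (Suc n) w - (\<i> * (z - w)) * Phi a (Suc n) z * PsiStar a (Suc n) w - (- 2 * \<i> * w) * PhiStar a (Suc n) z * Psi a (Suc n) w + (- \<i> * (z + w)) * Psi a (Suc n) z * PhiStar a (Suc n) w + (\<i> * (z - w)) * Psi a (Suc n) z * PsiStar a (Suc n) w" for z w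
    apply (subst pair_step[where F=Phi and FA=Phi and FB=PhiStar and G=PsiStar and GA=PsiStar and GB=Psi and n=n and z=z and w=w, OF fPhi_Suc fPsiStar_Suc cPhi_j cPsiStar_j cPhi_n cPsiStar_n I10 I9 I12 I11 in4(1) in4(2) in4(4) in4(3)])
    apply (simp_all only: Phi_Suc PhiStar_Suc Psi_Suc PsiStar_Suc)
    apply algebra
    done
  have J11: "(z - w) * 2 * pbracket (Suc n) (\<lambda>b. PhiStar b (Suc n) z) (\<lambda>b. Psi b (Suc n) w) a = - (- 2 * \<i> * z) * Phi a (Suc n) z * PsiStar a (Suc n) w - (\<i> * (z - w)) * PhiStar a (Suc n) z * Phi a (Suc n) w + (\<i> * (z - w)) * PhiStar a (Suc n) z * Psi a (Suc n) w + (- \<i> * (z + w)) * PsiStar a (Suc n) z * Phi a (Suc n) w - (\<i> * (z - w)) * PsiStar a (Suc n) z * Psi a (Suc n) w" for z w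
    apply (subst pair_step[where F=PhiStar and FA=PhiStar and FB=Phi and G=Psi and GA=Psi and GB=PsiStar and n=n and z=z and w=w, OF fPhiStar_Suc fPsi_Suc cPhiStar_j cPsi_j cPhiStar_n cPsi_n I11 I12 I9 I10 in4(2) in4(1) in4(3) in4(4)])
    apply (simp_all only: Phi_Suc PhiStar_Suc Psi_Suc PsiStar_Suc)
    apply algebra
    done
  have J12: "(z - w) * 2 * pbracket (Suc n) (\<lambda>b. PhiStar b (Suc n) z) (\<lambda>b. PsiStar b (Suc n) w) a = (\<i> * (z - w)) * PhiStar a (Suc n) z * PhiStar a (Suc n) w + (- \<i> * (z + w)) * PhiStar a (Suc n) z * PsiStar a (Suc n) w - (- \<i> * (z + w)) * PsiStar a (Suc n) z * PhiStar a (Suc n) w - (\<i> * (z - w)) * PsiStar a (Suc n) z * PsiStar a (Suc n) w" for z w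
    apply (subst pair_step[where F=PhiStar and FA=PhiStar and FB=Phi and G=PsiStar and GA=PsiStar and GB=Psi and n=n and z=z and w=w, OF fPhiStar_Suc fPsiStar_Suc cPhiStar_j cPsiStar_j cPhiStar_n cPsiStar_n I12 I11 I10 I9 in4(2) in4(1) in4(4) in4(3)])
    apply (simp_all only: Phi_Suc PhiStar_Suc Psi_Suc PsiStar_Suc)
    apply algebra
    done
  show ?case using J1 J2 J3 J4 J5 J6 J7 J8 J9 J10 J11 J12 by blast
qed

lemma pb_self: "pbracket n f f a = 0"
  unfolding pbracket_def by (simp add: mult.commute)

lemma zero_from: assumes "(z - w) * 2 * pbracket n (\<lambda>b. F b n z) (\<lambda>b. F b n w) a = 0"
  shows "pbracket n (\<lambda>b. F b n z) (\<lambda>b. F b n w) a = 0"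
proof (cases "z = w")
  case True then show ?thesis by (simp add: pb_self)
next
  case False then show ?thesis using assms by simp
qed

theorem theorem13p4:
  fixes n :: nat and a :: "nat \<Rightarrow> complex" and z w :: complex
  assumes "n \<ge> 1" and "\<forall>j<n. norm (a j) < 1"
  shows "pbracket n (\<lambda>b. Phi b n z) (\<lambda>b. Phi b n w) a = 0
    \<and> pbracket n (\<lambda>b. Psi b n z) (\<lambda>b. Psi b n w) a = 0
    \<and> pbracket n (\<lambda>b. PhiStar b n z) (\<lambda>b. PhiStar b n w) a = 0
    \<and> pbracket n (\<lambda>b. PsiStar b n z) (\<lambda>b. PsiStar b n w) a = 0
    \<and> (z \<noteq> w \<longrightarrow>
        pbracket n (\<lambda>b. PhiStar b n z) (\<lambda>b. PsiStar b n w) a =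
          - (\<i> / 2) * ((PhiStar a n z * PsiStar a n w - PsiStar a n z * PhiStar a n w) * ((z + w) / (z - w))
                       - PhiStar a n z * PhiStar a n w + PsiStar a n z * PsiStar a n w))
    \<and> (z \<noteq> w \<longrightarrow>
        pbracket n (\<lambda>b. Phi b n z) (\<lambda>b. Psi b n w) a =
          - (\<i> / 2) * ((Phi a n z * Psi a n w - Psi a n z * Phi a n w) * ((z + w) / (z - w))
                       + Phi a n z * Phi a n w - Psi a n z * Psi a n w))"
proof -
  note M = main_ind[of n a]
  have e1: "pbracket n (\<lambda>b. Phi b n z) (\<lambda>b. Phi b n w) a = 0"
    by (rule zero_from) (rule M[THEN conjunct1, THEN spec, THEN spec])
  have e2: "pbracket n (\<lambda>b. Psi b n z) (\<lambda>b. Psi b n w) a = 0"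
    by (rule zero_from) (rule M[THEN conjunct2, THEN conjunct2, THEN conjunct2, THEN conjunct2, THEN conjunct1, THEN spec, THEN spec])
  have e3: "pbracket n (\<lambda>b. PhiStar b n z) (\<lambda>b. PhiStar b n w) a = 0"
    by (rule zero_from) (rule M[THEN conjunct2, THEN conjunct2, THEN conjunct2, THEN conjunct1, THEN spec, THEN spec])
  have e4: "pbracket n (\<lambda>b. PsiStar b n z) (\<lambda>b. PsiStar b n w) a = 0"
    by (rule zero_from) (rule M[THEN conjunct2, THEN conjunct2, THEN conjunct2, THEN conjunct2, THEN conjunct2, THEN conjunct2, THEN conjunct2, THEN conjunct1, THEN spec, THEN spec])
  have e5: "pbracket n (\<lambda>b. PhiStar b n z) (\<lambda>b. PsiStar b n w) a =
          - (\<i> / 2) * ((PhiStar a n z * PsiStar a n w - PsiStar a n z * PhiStar a n w) * ((z + w) / (z - w))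
                       - PhiStar a n z * PhiStar a n w + PsiStar a n z * PsiStar a n w)" if zw: "z \<noteq> w"
  proof -
    have h: "(z - w) * 2 * pbracket n (\<lambda>b. PhiStar b n z) (\<lambda>b. PsiStar b n w) a = (\<i> * (z - w)) * PhiStar a n z * PhiStar a n w + (- \<i> * (z + w)) * PhiStar a n z * PsiStar a n w - (- \<i> * (z + w)) * PsiStar a n z * PhiStar a n w - (\<i> * (z - w)) * PsiStar a n z * PsiStar a n w"
      by (rule M[THEN conjunct2, THEN conjunct2, THEN conjunct2, THEN conjunct2, THEN conjunct2, THEN conjunct2, THEN conjunct2, THEN conjunct2, THEN conjunct2, THEN conjunct2, THEN conjunct2, THEN spec, THEN spec])
    have zw': "z - w \<noteq> 0" using zw by simp
    show ?thesis
      using h zw' by (simp add: field_simps, (simp add: algebra_simps)?)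
  qed
  have e6: "pbracket n (\<lambda>b. Phi b n z) (\<lambda>b. Psi b n w) a =
          - (\<i> / 2) * ((Phi a n z * Psi a n w - Psi a n z * Phi a n w) * ((z + w) / (z - w))
                       + Phi a n z * Phi a n w - Psi a n z * Psi a n w)" if zw: "z \<noteq> w"
  proof -
    have h: "(z - w) * 2 * pbracket n (\<lambda>b. Phi b n z) (\<lambda>b. Psi b n w) a = - (\<i> * (z - w)) * Phi a n z * Phi a n w + (- \<i> * (z + w)) * Phi a n z * Psi a n w - (- \<i> * (z + w)) * Psi a n z * Phi a n w + (\<i> * (z - w)) * Psi a n z * Psi a n w"
      by (rule M[THEN conjunct2, THEN conjunct2, THEN conjunct2, THEN conjunct2, THEN conjunct2, THEN conjunct2, THEN conjunct2, THEN conjunct2, THEN conjunct1, THEN spec, THEN spec])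
    have zw': "z - w \<noteq> 0" using zw by simp
    show ?thesis
      using h zw' by (simp add: field_simps, (simp add: algebra_simps)?)
  qed
  show ?thesis using e1 e2 e3 e4 e5 e6 by blast
qed

end
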